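(* Let $\gamma$ be a planar strictly convex $C^2$ smooth closed curve and consider the Birkhoff billiard map $T$ in $\gamma$ on the phase cylinder $\mathbb{A}$ of oriented lines intersecting $\gamma$. Let $\mathcal{M}_L$ be the set swept by m-orbits for the generating function $L(s,s_1)=|\gamma(s_1)-\gamma(s)|$ in the coordinates $(s,\cos\delta)$, and $\mathcal{M}_S$ the set swept by m-orbits for the generating function $S(\varphi,\varphi_1)=2h(\psi)\sin\delta$, $\psi=\frac{\varphi+\varphi_1}{2}$, $\delta=\frac{\varphi_1-\varphi}{2}$, in the coordinates $(\varphi,p)$. Then $\mathcal{M}_L=\mathcal{M}_S$.
   Context: An oriented line meeting $\gamma$ at the point $\gamma(s)$ ($s$ arc length) with angle $\delta\in(0,\pi)$ to the tangent has coordinates $(s,\cos\delta)$; alternatively it has coordinates $(\varphi,p)$, where $\varphi$ is the angle between the right unit normal of the line and the horizontal direction and $p$ is the signed distance from the origin (an interior point) to the line. Both are symplectic coordinates on $\mathbb{A}$. $h$ is the support function of $\gamma$, $h(\psi)=\max_{X\in\gamma}\langle X,(\cos\psi,\sin\psi)\rangle$. Generating function convention: $T(s,\cos\delta)=(s_1,\cos\delta_1)$ iff $\cos\delta=-L_1(s,s_1)$, $\cos\delta_1=L_2(s,s_1)$; $T(\varphi,p)=(\varphi_1,p_1)$ iff $p=-S_1(\varphi,\varphi_1)$, $p_1=S_2(\varphi,\varphi_1)$; both satisfy $L_{12}>0$, $S_{12}>0$ (subscripts denote partial derivatives). For a generating function $H$ (either $L$ or $S$), a configuration $\{q_n\}_{n\in\mathbb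 Z}$ (first coordinates of an orbit) is an m-configuration if for any integers $M<N$ the segment $(q_{M+1},\dots,q_{N-1})$ is a local maximum of $\sum_{n=M}^{N-1}H(x_n,x_{n+1})$ with fixed end points $x_M=q_M$, $x_N=q_N$; the corresponding orbits are m-orbits. *)

theory Defs
  imports "HOL-Analysis.Analysis"
begin

text \<open>Points of the plane are complex numbers; the origin 0 is the reference
  interior point. The curve gamma is parametrised by arc length, counterclockwise,
  as a P-periodic function on the reals (P = perimeter).\<close>

definition unit_dir :: "complex \<Rightarrow> complex \<Rightarrow> complex" where
  "unit_dir a b = (b - a) / complex_of_real (norm (b - a))"

text \<open>The oriented line through a and b, oriented from a to b, encoded canonically
  as (right unit normal n, signed distance p of the origin to the line), i.e. the
  line {x. inner x n = p} with direction i*n. In the notation of the paper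
  n = (cos phi, sin phi).\<close>
definition oriented_line :: "complex \<Rightarrow> complex \<Rightarrow> complex \<times> real" where
  "oriented_line a b = (let n = - \<i> * unit_dir a b in (n, inner a n))"

text \<open>Billiard orbits, described by a lift (s_n) of the arc-length coordinates of the
  consecutive reflection points, normalised by s_n < s_(n+1) < s_n + P. The n-th point
  of the orbit is the oriented chord from gamma(s_n) to gamma(s_(n+1)); consecutive
  chords are related by the reflection law at gamma(s_n) (equal tangential components
  of the incoming and outgoing unit directions).\<close>
definition billiard_orbit ::
  "(real \<Rightarrow> complex) \<Rightarrow> (real \<Rightarrow> complex) \<Rightarrow> real \<Rightarrow> (int \<Rightarrow> real) \<Rightarrow> bool" where
  "billiard_orbit \<gamma> \<gamma>' P s \<longleftrightarrow>
     (\<forall>n. s n < s (n + 1) \<and> s (n + 1) < s n + P) \<and>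
     (\<forall>n. inner (unit_dir (\<gamma> (s (n - 1))) (\<gamma> (s n))) (\<gamma>' (s n))
          = inner (unit_dir (\<gamma> (s n)) (\<gamma> (s (n + 1)))) (\<gamma>' (s n)))"

definition m_config :: "(real \<Rightarrow> real \<Rightarrow> real) \<Rightarrow> (int \<Rightarrow> real) \<Rightarrow> bool" where
  "m_config H q \<longleftrightarrow>
     (\<forall>M N. M < N \<longrightarrow>
        (\<exists>e>0. \<forall>x::int \<Rightarrow> real.
            (\<forall>n. (n \<le> M \<or> N \<le> n) \<longrightarrow> x n = q n) \<and> (\<forall>n. \<bar>x n - q n\<bar> < e) \<longrightarrow>
            (\<Sum>n\<in>{M..<N}. H (x n) (x (n + 1))) \<le> (\<Sum>n\<in>{M..<N}. H (q n) (q (n + 1)))))"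

definition support_fun :: "(real \<Rightarrow> complex) \<Rightarrow> real \<Rightarrow> real" where
  "support_fun \<gamma> \<psi> = (SUP t. inner (\<gamma> t) (cis \<psi>))"

definition L_gen :: "(real \<Rightarrow> complex) \<Rightarrow> real \<Rightarrow> real \<Rightarrow> real" where
  "L_gen \<gamma> s s1 = norm (\<gamma> s1 - \<gamma> s)"

definition S_gen :: "(real \<Rightarrow> complex) \<Rightarrow> real \<Rightarrow> real \<Rightarrow> real" where
  "S_gen \<gamma> \<phi> \<phi>1 = 2 * support_fun \<gamma> ((\<phi> + \<phi>1) / 2) * sin ((\<phi>1 - \<phi>) / 2)"

definition M_L :: "(real \<Rightarrow> complex) \<Rightarrow> (real \<Rightarrow> complex) \<Rightarrow> real \<Rightarrow> (complex \<times> real) set" where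
  "M_L \<gamma> \<gamma>' P =
     {oriented_line (\<gamma> (s n)) (\<gamma> (s (n + 1))) | s n.
        billiard_orbit \<gamma> \<gamma>' P s \<and> m_config (L_gen \<gamma>) s}"

text \<open>Set swept by m-orbits for S in the coordinates (phi, p): phi_n is the lifted
  angle of the right unit normal of the n-th chord, with phi_n < phi_(n+1) < phi_n + 2 pi
  (phi_(n+1) - phi_n = 2 delta_n).\<close>
definition M_S :: "(real \<Rightarrow> complex) \<Rightarrow> (real \<Rightarrow> complex) \<Rightarrow> real \<Rightarrow> (complex \<times> real) set" where
  "M_S \<gamma> \<gamma>' P =
     {oriented_line (\<gamma> (s n)) (\<gamma> (s (n + 1))) | s \<phi> n.
        billiard_orbit \<gamma> \<gamma>' P s \<and>
        (\<forall>k. cis (\<phi> k) = fst (oriented_line (\<gamma> (s k)) (\<gamma> (s (k + 1)))) \<and>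
             \<phi> k < \<phi> (k + 1) \<and> \<phi> (k + 1) < \<phi> k + 2 * pi) \<and>
        m_config (S_gen \<gamma>) \<phi>}"

end

theory Submission
  imports Defs
begin


locale bill =
  fixes \<gamma> \<gamma>' :: "real \<Rightarrow> complex" and P :: real
  assumes P: "P > 0" and cont: "continuous_on UNIV \<gamma>"
    and unit: "\<forall>t. norm (\<gamma>' t) = 1" and per: "\<forall>t. \<gamma> (t + P) = \<gamma> t"
    and inj: "inj_on \<gamma> {0..<P}"
    and cvx: "\<forall>s t. \<gamma> t \<noteq> \<gamma> s \<longrightarrow> Im (cnj (\<gamma>' s) * (\<gamma> t - \<gamma> s)) > 0"
begin

lemma per_int: "\<gamma> (t + of_int k * P) = \<gamma> t"
proof (induction k rule: int_induct[where k=0])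
  case base then show ?case by simp
next
  case (step1 i)
  have "\<gamma> (t + of_int (i+1) * P) = \<gamma> ((t + of_int i * P) + P)" by (simp add: algebra_simps)
  also have "\<dots> = \<gamma> t" using per step1 by simp
  finally show ?case .
next
  case (step2 i)
  have "\<gamma> (t + of_int i * P) = \<gamma> ((t + of_int (i - 1) * P) + P)" by (simp add: algebra_simps)
  also have "\<dots> = \<gamma> (t + of_int (i - 1) * P)" using per by simp
  finally show ?case using step2 by simp
qed

lemma red: "\<exists>t'. a \<le> t' \<and> t' < a + P \<and> \<gamma> t = \<gamma> t' \<and> (\<exists>k::int. t' = t + of_int k * P)"
proof -
  define k where "k = - floor ((t - a) / P)"
  define t' where "t' = t + of_int k * P"
  have "of_int (floor ((t - a) / P)) * P \<le> t - a" using floor_divide_lower[OF P] .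
  moreover have "t - a < (of_int (floor ((t - a) / P)) + 1) * P" using floor_divide_upper[OF P] .
  ultimately have "a \<le> t' \<and> t' < a + P" unfolding t'_def k_def by (simp add: algebra_simps)
  then show ?thesis using per_int[of t k] t'_def by auto
qed

lemma neq: assumes "a < b" "b < a + P" shows "\<gamma> a \<noteq> \<gamma> b"
proof
  assume eq: "\<gamma> a = \<gamma> b"
  obtain a' k where a': "0 \<le> a'" "a' < P" "\<gamma> a = \<gamma> a'" "a' = a + of_int k * P"
    using red[of 0 a] by auto
  obtain b' l where b': "0 \<le> b'" "b' < P" "\<gamma> b = \<gamma> b'" "b' = b + of_int l * P"
    using red[of 0 b] by auto
  have "a' = b'" using inj a' b' eq by (auto simp: inj_on_def)
  then have "b - a = of_int (k - l) * P" using a' b' by (simp add: algebra_simps)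
  then have "0 < of_int (k - l) * P" "of_int (k - l) * P < P" using assms by (linarith, linarith)
  then have "0 < real_of_int (k - l)" "real_of_int (k - l) < 1" using P
    by (auto simp: zero_less_mult_iff)
  then show False by (metis of_int_0_less_iff of_int_less_1_iff zless_imp_add1_zle not_less add_0)
qed

lemma bnd: "\<exists>R>0. \<forall>t. norm (\<gamma> t) \<le> R"
proof -
  have "compact (\<gamma> ` {0..P})"
    by (rule compact_continuous_image) (auto intro: continuous_on_subset[OF cont])
  then obtain R where R: "R > 0" "\<forall>x\<in>\<gamma> ` {0..P}. norm x \<le> R"
    using compact_imp_bounded bounded_pos by metis
  have "norm (\<gamma> t) \<le> R" for t
  proof -
    obtain t' where "0 \<le> t'" "t' < 0 + P" "\<gamma> t = \<gamma> t'" using red[of 0 t] by blast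
    then show ?thesis using R(2) by auto
  qed
  then show ?thesis using R by blast
qed

lemma argmax: "\<exists>t. a \<le> t \<and> t \<le> a + P \<and> (\<forall>u. inner (\<gamma> u) w \<le> inner (\<gamma> t) w)"
proof -
  have c: "continuous_on {a..a+P} (\<lambda>t. inner (\<gamma> t) w)"
    by (rule continuous_on_inner[OF continuous_on_subset[OF cont] continuous_on_const]) simp
  have ne: "{a..a+P} \<noteq> {}" using P by simp
  obtain t where t: "t \<in> {a..a+P}" "\<forall>u\<in>{a..a+P}. inner (\<gamma> u) w \<le> inner (\<gamma> t) w"
    using continuous_attains_sup[OF compact_Icc ne c] by blast
  have "inner (\<gamma> u) w \<le> inner (\<gamma> t) w" for u
  proof -
    obtain u' where "a \<le> u'" "u' < a + P" "\<gamma> u = \<gamma> u'" using red[of a u] by blast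
    then show ?thesis using t(2) by auto
  qed
  then show ?thesis using t by auto
qed

lemma bdd: "bdd_above (range (\<lambda>t. inner (\<gamma> t) w))"
  using argmax[of 0 w] by (auto simp: bdd_above_def)


definition F :: "real \<Rightarrow> real \<Rightarrow> real" where "F x a = inner (\<gamma> x) (\<i> * cis a)"

lemma K1: "F b y - F a y \<le> L_gen \<gamma> a b"
proof -
  have "F b y - F a y = inner (\<gamma> b - \<gamma> a) (\<i> * cis y)" unfolding F_def by (simp add: inner_diff_left)
  also have "\<dots> \<le> norm (\<gamma> b - \<gamma> a) * norm (\<i> * cis y)" by (rule norm_cauchy_schwarz)
  finally show ?thesis by (simp add: L_gen_def norm_mult)
qed

lemma inner_self_div: "inner z (z / complex_of_real (norm z)) = norm z"
proof (cases "z = 0")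
  case False
  have "z / complex_of_real (norm z) = scaleR (1 / norm z) z" by (simp add: scaleR_conv_of_real divide_inverse mult.commute)
  then show ?thesis using False by (simp add: power2_norm_eq_inner[symmetric] power2_eq_square)
qed simp

lemma E1: assumes "\<gamma> a \<noteq> \<gamma> b \<Longrightarrow> \<i> * cis y = unit_dir (\<gamma> a) (\<gamma> b)"
  shows "F b y - F a y = L_gen \<gamma> a b"
proof (cases "\<gamma> a = \<gamma> b")
  case True then show ?thesis by (simp add: F_def L_gen_def)
next
  case False
  have "F b y - F a y = inner (\<gamma> b - \<gamma> a) (\<i> * cis y)" unfolding F_def by (simp add: inner_diff_left)
  also have "\<dots> = norm (\<gamma> b - \<gamma> a)" using assms False by (simp add: unit_dir_def inner_self_div)
  finally show ?thesis by (simp add: L_gen_def)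
qed

lemma trig: "\<i> * (cis a - cis b) = complex_of_real (2 * sin ((b - a)/2)) * cis ((a+b)/2)"
proof -
  define p where "p = (a+b)/2"
  define d where "d = (b-a)/2"
  have a: "a = p + (-d)" and b: "b = p + d" unfolding p_def d_def by (simp_all add: field_simps)
  have c: "cis (-d) - cis d = - 2 * \<i> * complex_of_real (sin d)"
    by (simp add: complex_eq_iff)
  have ca: "cis a = cis p * cis (-d)" using cis_mult[of p "-d"] a by simp
  have cb: "cis b = cis p * cis d" using cis_mult[of p d] b by simp
  have "\<i> * (cis a - cis b) = \<i> * cis p * (cis (-d) - cis d)"
    unfolding ca cb by (simp only: right_diff_distrib mult.assoc)
  also have "\<dots> = complex_of_real (2 * sin d) * cis p" unfolding c by (simp add: algebra_simps)
  finally show ?thesis using p_def d_def by simp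
qed

lemma Fdiff: "F x a - F x b = 2 * sin ((b-a)/2) * inner (\<gamma> x) (cis ((a+b)/2))"
proof -
  have "F x a - F x b = inner (\<gamma> x) (\<i> * (cis a - cis b))" unfolding F_def
    by (simp add: inner_diff_right algebra_simps)
  also have "\<dots> = inner (\<gamma> x) (scaleR (2 * sin ((b - a)/2)) (cis ((a+b)/2)))"
    unfolding trig scaleR_conv_of_real ..
  finally show ?thesis by simp
qed

lemma K2: assumes "sin ((b-a)/2) \<ge> 0" shows "F x a - F x b \<le> S_gen \<gamma> a b"
proof -
  have "inner (\<gamma> x) (cis ((a+b)/2)) \<le> support_fun \<gamma> ((a+b)/2)"
    unfolding support_fun_def by (rule cSUP_upper[OF UNIV_I bdd])
  then have "2 * sin ((b-a)/2) * inner (\<gamma> x) (cis ((a+b)/2)) \<le> 2 * sin ((b-a)/2) * support_fun \<gamma> ((a+b)/2)"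
    by (rule mult_left_mono) (use assms in simp)
  moreover have "S_gen \<gamma> a b = 2 * sin ((b-a)/2) * support_fun \<gamma> ((a+b)/2)"
    unfolding S_gen_def by (simp only: mult_ac)
  ultimately show ?thesis unfolding Fdiff by linarith
qed

lemma supp_eq: assumes "\<forall>u. inner (\<gamma> u) (cis p) \<le> inner (\<gamma> x) (cis p)"
  shows "support_fun \<gamma> p = inner (\<gamma> x) (cis p)"
  unfolding support_fun_def using assms by (intro cSup_eq_maximum) auto

lemma E2: assumes "\<forall>u. inner (\<gamma> u) (cis ((a+b)/2)) \<le> inner (\<gamma> x) (cis ((a+b)/2))"
  shows "F x a - F x b = S_gen \<gamma> a b"
  unfolding Fdiff S_gen_def supp_eq[OF assms] by (simp only: mult_ac)


lemma fst_ol: "fst (oriented_line x y) = - \<i> * unit_dir x y"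
  by (simp add: oriented_line_def Let_def)

lemma inner_div_real: "inner (z / complex_of_real r) y = inner z y / r"
  by (simp add: inner_complex_def add_divide_distrib)

lemma norm_unit_dir: "x \<noteq> y \<Longrightarrow> norm (unit_dir x y) = 1"
  by (simp add: unit_dir_def norm_divide)

lemma side: "\<gamma> t \<noteq> \<gamma> s \<Longrightarrow> inner (\<gamma> t - \<gamma> s) (- \<i> * \<gamma>' s) < 0"
  using cvx[rule_format, of t s] by (simp add: inner_complex_def algebra_simps)

lemma decomp: assumes "norm T = 1"
  shows "inner v w = inner v T * inner w T + inner v (- \<i> * T) * inner w (- \<i> * T)"
proof -
  have n: "(Re T)^2 + (Im T)^2 = 1" using assms by (simp add: cmod_def)
  have "inner v T * inner w T + inner v (- \<i> * T) * inner w (- \<i> * T)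
      = (Re v * Re w + Im v * Im w) * ((Re T)^2 + (Im T)^2)"
    by (simp add: inner_complex_def power2_eq_square algebra_simps)
  then show ?thesis using n by (simp add: inner_complex_def)
qed

lemma reflect:
  assumes orb: "billiard_orbit \<gamma> \<gamma>' P s"
    and cphi: "\<forall>k. cis (\<phi> k) = fst (oriented_line (\<gamma> (s k)) (\<gamma> (s (k + 1))))"
    and gap: "\<forall>k. \<phi> k < \<phi> (k + 1) \<and> \<phi> (k + 1) < \<phi> k + 2 * pi"
  shows "inner (\<gamma> u) (cis ((\<phi> (n - 1) + \<phi> n)/2)) \<le> inner (\<gamma> (s n)) (cis ((\<phi> (n - 1) + \<phi> n)/2)) \<and>
    (\<gamma> u \<noteq> \<gamma> (s n) \<longrightarrow> inner (\<gamma> u) (cis ((\<phi> (n - 1) + \<phi> n)/2)) < inner (\<gamma> (s n)) (cis ((\<phi> (n - 1) + \<phi> n)/2)))"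
proof -
  define T where "T = \<gamma>' (s n)"
  define X where "X = \<gamma> (s n)"
  define uin where "uin = unit_dir (\<gamma> (s (n - 1))) X"
  define uout where "uout = unit_dir X (\<gamma> (s (n + 1)))"
  define a where "a = \<phi> (n - 1)"
  define b where "b = \<phi> n"
  have T1: "norm T = 1" using unit T_def by simp
  have o1: "s (n - 1) < s n" "s n < s (n - 1) + P" using orb unfolding billiard_orbit_def
    by (metis diff_add_cancel)+
  have o2: "s n < s (n + 1)" "s (n + 1) < s n + P" using orb unfolding billiard_orbit_def by auto
  have ne1: "\<gamma> (s (n - 1)) \<noteq> X" using neq[OF o1] X_def by simp
  have ne2: "X \<noteq> \<gamma> (s (n + 1))" using neq[OF o2] X_def by simp
  have ca: "\<i> * cis a = uin"
    using cphi[rule_format, of "n - 1"] unfolding a_def uin_def X_def fst_ol by simp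
  have cb: "\<i> * cis b = uout"
    using cphi[rule_format, of n] unfolding b_def uout_def X_def fst_ol by simp
  have rl: "inner uin T = inner uout T"
    using orb unfolding billiard_orbit_def uin_def uout_def X_def T_def by blast
  have in_pos: "inner uin (- \<i> * T) > 0"
  proof -
    have "inner (\<gamma> (s (n - 1)) - X) (- \<i> * T) < 0" using side[of "s (n - 1)" "s n"] ne1 X_def T_def by simp
    then have "inner (X - \<gamma> (s (n - 1))) (- \<i> * T) > 0"
      by (metis inner_minus_left minus_diff_eq neg_0_less_iff_less)
    moreover have "norm (X - \<gamma> (s (n - 1))) > 0" using ne1 by simp
    ultimately show ?thesis unfolding uin_def unit_dir_def inner_div_real by (simp add: divide_neg_pos)
  qed
  have out_neg: "inner uout (- \<i> * T) < 0"
  proof -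
    have "inner (\<gamma> (s (n + 1)) - X) (- \<i> * T) < 0" using side[of "s (n + 1)" "s n"] ne2 X_def T_def by simp
    moreover have "norm (\<gamma> (s (n + 1)) - X) > 0" using ne2 by simp
    ultimately show ?thesis unfolding uout_def unit_dir_def inner_div_real by (simp add: divide_neg_pos)
  qed
  define w where "w = uin - uout"
  have wT: "inner w T = 0" using rl unfolding w_def by (simp add: inner_diff_left)
  have wN: "inner w (- \<i> * T) > 0" using in_pos out_neg unfolding w_def by (simp add: inner_diff_left)
  have sd: "sin ((b - a)/2) > 0"
  proof -
    have "0 < (b - a)/2" "(b - a)/2 < pi" using gap[rule_format, of "n - 1"] unfolding a_def b_def by auto
    then show ?thesis by (rule sin_gt_zero)
  qed
  have w_eq: "w = complex_of_real (2 * sin ((b - a)/2)) * cis ((a + b)/2)"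
    unfolding w_def using trig[of a b] ca cb by (simp add: right_diff_distrib)
  have key: "inner (\<gamma> u - X) w \<le> 0 \<and> (\<gamma> u \<noteq> X \<longrightarrow> inner (\<gamma> u - X) w < 0)"
  proof (cases "\<gamma> u = X")
    case True then show ?thesis by simp
  next
    case False
    have "inner (\<gamma> u - X) (- \<i> * T) < 0" using side[of u "s n"] False X_def T_def by simp
    then have "inner (\<gamma> u - X) (- \<i> * T) * inner w (- \<i> * T) < 0" using wN mult_neg_pos by blast
    then show ?thesis using decomp[OF T1, of "\<gamma> u - X" w] wT False by simp
  qed
  have "inner (\<gamma> u - X) w = 2 * sin ((b - a)/2) * inner (\<gamma> u - X) (cis ((a + b)/2))"
    unfolding w_eq by (simp only: scaleR_conv_of_real[symmetric] inner_scaleR_right)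
  then have "inner (\<gamma> u - X) (cis ((a + b)/2)) \<le> 0 \<and> (\<gamma> u \<noteq> X \<longrightarrow> inner (\<gamma> u - X) (cis ((a + b)/2)) < 0)"
    using key sd by (auto simp: mult_le_0_iff mult_less_0_iff)
  then show ?thesis unfolding a_def b_def X_def by (simp add: inner_diff_left)
qed

lemma orb_neq: assumes "billiard_orbit \<gamma> \<gamma>' P s" shows "\<gamma> (s k) \<noteq> \<gamma> (s (k + 1))"
  using assms neq unfolding billiard_orbit_def by blast

lemma dirs_ne:
  assumes orb: "billiard_orbit \<gamma> \<gamma>' P s"
  shows "unit_dir (\<gamma> (s (n - 1))) (\<gamma> (s n)) \<noteq> unit_dir (\<gamma> (s n)) (\<gamma> (s (n + 1)))"
proof
  assume eq: "unit_dir (\<gamma> (s (n - 1))) (\<gamma> (s n)) = unit_dir (\<gamma> (s n)) (\<gamma> (s (n + 1)))"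
  define T where "T = \<gamma>' (s n)"
  define X where "X = \<gamma> (s n)"
  have ne1: "\<gamma> (s (n - 1)) \<noteq> X" using orb_neq[OF orb, of "n - 1"] X_def by simp
  have ne2: "X \<noteq> \<gamma> (s (n + 1))" using orb_neq[OF orb, of n] X_def by simp
  have "inner (\<gamma> (s (n - 1)) - X) (- \<i> * T) < 0" using side[of "s (n - 1)" "s n"] ne1 X_def T_def by simp
  then have "inner (X - \<gamma> (s (n - 1))) (- \<i> * T) > 0"
    by (metis inner_minus_left minus_diff_eq neg_0_less_iff_less)
  moreover have "norm (X - \<gamma> (s (n - 1))) > 0" using ne1 by simp
  ultimately have A: "inner (unit_dir (\<gamma> (s (n - 1))) X) (- \<i> * T) > 0"
    unfolding unit_dir_def inner_div_real by (simp add: divide_neg_pos)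
  have "inner (\<gamma> (s (n + 1)) - X) (- \<i> * T) < 0" using side[of "s (n + 1)" "s n"] ne2 X_def T_def by simp
  moreover have "norm (\<gamma> (s (n + 1)) - X) > 0" using ne2 by simp
  ultimately have B: "inner (unit_dir X (\<gamma> (s (n + 1)))) (- \<i> * T) < 0"
    unfolding unit_dir_def inner_div_real by (simp add: divide_neg_pos)
  show False using A B eq X_def by simp
qed

lemma cis_Arg2pi: "norm z = 1 \<Longrightarrow> cis (Arg2pi z) = z"
  using Arg2pi[of z] unfolding is_Arg_def by (simp add: cis_conv_exp)

lemma phi_exists:
  assumes orb: "billiard_orbit \<gamma> \<gamma>' P s"
  shows "\<exists>\<phi>. \<forall>k. cis (\<phi> k) = fst (oriented_line (\<gamma> (s k)) (\<gamma> (s (k + 1)))) \<and>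
             \<phi> k < \<phi> (k + 1) \<and> \<phi> (k + 1) < \<phi> k + 2 * pi"
proof -
  define c where "c k = fst (oriented_line (\<gamma> (s k)) (\<gamma> (s (k + 1))))" for k
  have cn: "norm (c k) = 1" for k
    unfolding c_def fst_ol using norm_unit_dir[OF orb_neq[OF orb, of k]] by (simp add: norm_mult)
  have c0: "c k \<noteq> 0" for k using cn[of k] by auto
  define D where "D k = Arg2pi (c (k + 1) / c k)" for k
  have cisD: "cis (D k) = c (k + 1) / c k" for k
    unfolding D_def by (rule cis_Arg2pi) (simp add: norm_divide cn)
  have D0: "0 \<le> D k" "D k < 2 * pi" for k using Arg2pi unfolding D_def by auto
  have Dne: "D k \<noteq> 0" for k
  proof
    assume "D k = 0"
    then have "c (k + 1) / c k = 1" using cisD[of k] by simp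
    then have "c (k + 1) = c k" using c0[of k] by (simp add: divide_eq_1_iff)
    then show False using dirs_ne[OF orb, of "k + 1"] unfolding c_def fst_ol by simp
  qed
  define \<phi> where "\<phi> k = Arg2pi (c 0) + (if 0 \<le> k then sum D {0..<k} else - sum D {k..<0})" for k
  have step: "\<phi> (k + 1) = \<phi> k + D k" for k
  proof (cases "0 \<le> k")
    case True
    have "{0..<k+1} = insert k {0..<k}" using True by auto
    then show ?thesis using True unfolding \<phi>_def by simp
  next
    case False
    have i: "{k..<0} = insert k {k+1..<0}" using False by auto
    have "\<phi> (k + 1) = Arg2pi (c 0) - sum D {k+1..<0}"
      unfolding \<phi>_def using False by auto
    then show ?thesis using False unfolding \<phi>_def i by simp
  qed
  have cisphi: "cis (\<phi> k) = c k" for k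
  proof (induction k rule: int_induct[where k=0])
    case base then show ?case unfolding \<phi>_def by (simp add: cis_Arg2pi cn)
  next
    case (step1 i)
    have "cis (\<phi> (i + 1)) = cis (\<phi> i) * cis (D i)" by (simp add: step cis_mult)
    then show ?case using step1 cisD[of i] c0[of i] by simp
  next
    case (step2 i)
    have "cis (\<phi> i) = cis (\<phi> (i - 1)) * cis (D (i - 1))" using step[of "i - 1"] by (simp add: cis_mult)
    then have "c i = cis (\<phi> (i - 1)) * (c i / c (i - 1))" using step2 cisD[of "i - 1"] by simp
    then show ?case using c0[of "i - 1"] c0[of i] by (simp add: field_simps)
  qed
  show ?thesis
    by (rule exI[of _ \<phi>]) (use cisphi step D0 Dne in \<open>auto simp: c_def less_le\<close>)
qed


lemma isCont_g: "isCont \<gamma> x"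
  using cont continuous_on_eq_continuous_at[OF open_UNIV] by blast

definition cc :: "real \<Rightarrow> real \<Rightarrow> complex" where "cc a b = - \<i> * unit_dir (\<gamma> a) (\<gamma> b)"

lemma norm_cc: "\<gamma> a \<noteq> \<gamma> b \<Longrightarrow> norm (cc a b) = 1"
  unfolding cc_def using norm_unit_dir by (simp add: norm_mult)

lemma arg_close:
  assumes ne: "\<gamma> a0 \<noteq> \<gamma> b0" and e: "\<epsilon> > 0"
  shows "\<exists>d>0. \<forall>a b. \<bar>a - a0\<bar> < d \<longrightarrow> \<bar>b - b0\<bar> < d \<longrightarrow> \<bar>Arg (cc a b / cc a0 b0)\<bar> < \<epsilon>"
proof -
  define g where "g z = cc (fst z) (snd z) / cc a0 b0" for z
  have c0: "cc a0 b0 \<noteq> 0" using norm_cc[OF ne] by auto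
  have g1: "isCont (\<lambda>z. \<gamma> (fst z)) (a0, b0)" by (rule isCont_o2[OF isCont_fst[OF continuous_ident] isCont_g])
  have g2: "isCont (\<lambda>z. \<gamma> (snd z)) (a0, b0)" by (rule isCont_o2[OF isCont_snd[OF continuous_ident] isCont_g])
  have nz: "complex_of_real (norm (\<gamma> b0 - \<gamma> a0)) \<noteq> 0" using ne by simp
  have "isCont g (a0, b0)" unfolding g_def cc_def unit_dir_def
    using g1 g2 nz c0 unfolding cc_def unit_dir_def by (intro continuous_intros) auto
  moreover have "isCont Arg (g (a0, b0))"
    using c0 by (intro continuous_at_Arg) (simp add: g_def)
  ultimately have "isCont (Arg \<circ> g) (a0, b0)" by (rule continuous_at_compose)
  then obtain d where d: "d > 0" "\<forall>z. dist z (a0, b0) < d \<longrightarrow> dist ((Arg \<circ> g) z) ((Arg \<circ> g) (a0, b0)) < \<epsilon>"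
    using e unfolding continuous_at_eps_delta by blast
  have g0: "(Arg \<circ> g) (a0, b0) = 0" using c0 by (simp add: g_def)
  have "\<bar>Arg (cc a b / cc a0 b0)\<bar> < \<epsilon>" if "\<bar>a - a0\<bar> < d/2" "\<bar>b - b0\<bar> < d/2" for a b
  proof -
    have "dist (a, b) (a0, b0) \<le> \<bar>a - a0\<bar> + \<bar>b - b0\<bar>"
      unfolding dist_Pair_Pair dist_real_def using sqrt_sum_squares_le_sum_abs by simp
    then have "dist (a, b) (a0, b0) < d" using that by simp
    then show ?thesis using d(2) g0 by (auto simp: g_def dist_real_def)
  qed
  then show ?thesis using d(1) by (intro exI[of _ "d/2"]) auto
qed

lemma argmax_close:
  assumes strict: "\<forall>u. \<gamma> u \<noteq> \<gamma> s0 \<longrightarrow> inner (\<gamma> u) (cis p0) < inner (\<gamma> s0) (cis p0)" and e: "\<epsilon> > 0"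
  shows "\<exists>\<eta>>0. \<forall>p t. \<bar>p - p0\<bar> < \<eta> \<longrightarrow> \<bar>t - s0\<bar> \<le> P/2 \<longrightarrow>
            (\<forall>u. inner (\<gamma> u) (cis p) \<le> inner (\<gamma> t) (cis p)) \<longrightarrow> \<bar>t - s0\<bar> < \<epsilon>"
proof -
  define K where "K = {s0 - P/2 .. s0 - \<epsilon>} \<union> {s0 + \<epsilon> .. s0 + P/2}"
  have Kc: "compact K" unfolding K_def by auto
  have inK: "t \<in> K \<longleftrightarrow> \<epsilon> \<le> \<bar>t - s0\<bar> \<and> \<bar>t - s0\<bar> \<le> P/2" for t
    unfolding K_def atLeastAtMost_iff Un_iff using e by arith
  show ?thesis
  proof (cases "K = {}")
    case True
    then show ?thesis using inK by (intro exI[of _ 1]) force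
  next
    case False
    define g where "g t = inner (\<gamma> s0 - \<gamma> t) (cis p0)" for t
    have gc: "continuous_on K g" unfolding g_def
      by (intro continuous_intros continuous_on_subset[OF cont]) auto
    obtain t0 where t0: "t0 \<in> K" "\<forall>t\<in>K. g t0 \<le> g t"
      using continuous_attains_inf[OF Kc False gc] by blast
    have "\<gamma> t0 \<noteq> \<gamma> s0"
    proof -
      have a: "0 < \<bar>t0 - s0\<bar>" "\<bar>t0 - s0\<bar> \<le> P/2" using t0(1) inK e by force+
      show ?thesis
      proof (cases "t0 < s0")
        case True then show ?thesis using neq[of t0 s0] a P by auto
      next
        case False then show ?thesis using neq[of s0 t0] a P by auto
      qed
    qed
    then have m: "g t0 > 0" using strict unfolding g_def by (simp add: inner_diff_left)
    obtain R where R: "R > 0" "\<forall>t. norm (\<gamma> t) \<le> R" using bnd by blast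
    have "isCont cis p0" using continuous_on_cis[OF continuous_on_id, of UNIV] continuous_on_eq_continuous_at[OF open_UNIV, of cis] by simp
    then obtain \<eta> where \<eta>: "\<eta> > 0" "\<forall>p. dist p p0 < \<eta> \<longrightarrow> dist (cis p) (cis p0) < g t0 / (2 * R)"
      using m R unfolding continuous_at_eps_delta by (metis divide_pos_pos mult_pos_pos zero_less_numeral)
    have "\<bar>t - s0\<bar> < \<epsilon>" if p: "\<bar>p - p0\<bar> < \<eta>" and t: "\<bar>t - s0\<bar> \<le> P/2"
      and mx: "\<forall>u. inner (\<gamma> u) (cis p) \<le> inner (\<gamma> t) (cis p)" for p t
    proof (rule ccontr)
      assume "\<not> \<bar>t - s0\<bar> < \<epsilon>"
      then have "t \<in> K" using inK t by simp
      then have ge: "g t0 \<le> g t" using t0 by blast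
      have d: "norm (cis p0 - cis p) < g t0 / (2 * R)" using \<eta>(2) p norm_minus_commute[of "cis p0" "cis p"] by (simp add: dist_norm dist_real_def)
      have nb: "norm (\<gamma> s0 - \<gamma> t) \<le> 2 * R"
        using norm_triangle_ineq4[of "\<gamma> s0" "\<gamma> t"] R(2)[rule_format, of s0] R(2)[rule_format, of t] by simp
      have "g t = inner (\<gamma> s0 - \<gamma> t) (cis p) + inner (\<gamma> s0 - \<gamma> t) (cis p0 - cis p)"
        unfolding g_def by (simp add: inner_diff_right)
      also have "inner (\<gamma> s0 - \<gamma> t) (cis p) \<le> 0" using mx by (simp add: inner_diff_left)
      also have "inner (\<gamma> s0 - \<gamma> t) (cis p0 - cis p) \<le> norm (\<gamma> s0 - \<gamma> t) * norm (cis p0 - cis p)"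
        by (rule norm_cauchy_schwarz)
      also have "\<dots> \<le> 2 * R * norm (cis p0 - cis p)" using nb by (simp add: mult_right_mono)
      also have "\<dots> < 2 * R * (g t0 / (2 * R))" by (rule mult_strict_left_mono) (use d R(1) in auto)
      also have "\<dots> = g t0" using R by simp
      finally show False using ge by simp
    qed
    then show ?thesis using \<eta>(1) by blast
  qed
qed

end

lemma finite_min_delta:
  assumes "finite A" "\<forall>n\<in>A. \<exists>d>0. Q n d" "\<forall>n d d'. Q n d \<longrightarrow> 0 < d' \<longrightarrow> d' \<le> d \<longrightarrow> Q n d'"
  shows "\<exists>d>0. \<forall>n\<in>A. Q n (d::real)"
  using assms
proof (induction A rule: finite_induct)
  case empty then show ?case by (intro exI[of _ 1]) auto
next
  case (insert x A)
  obtain d1 where d1: "d1 > 0" "\<forall>n\<in>A. Q n d1" using insert by auto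
  obtain d2 where d2: "d2 > 0" "Q x d2" using insert by auto
  show ?case using d1 d2 insert.prems(2)
    by (intro exI[of _ "min d1 d2"]) (auto simp: min_le_iff_disj)
qed

lemma chainA:
  fixes G :: "real \<Rightarrow> real \<Rightarrow> real" and x y :: "int \<Rightarrow> real"
  assumes "M \<le> N"
  shows "(\<Sum>n\<in>{M..<N}. G (x (n+1)) (y n) - G (x n) (y n)) =
    (\<Sum>n\<in>{M-1..<N}. G (x (n+1)) (y n) - G (x (n+1)) (y (n+1))) - G (x M) (y (M-1)) + G (x N) (y N)"
  using assms
proof (induction N rule: int_ge_induct)
  case base
  have "{M-1..<M} = {M-1}" by auto
  then show ?case by simp
next
  case (step i)
  have a: "{M..<i+1} = insert i {M..<i}" using step by auto
  have b: "{M-1..<i+1} = insert i {M-1..<i}" using step by auto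
  show ?case unfolding a b using step by simp
qed

lemma chainB:
  fixes G :: "real \<Rightarrow> real \<Rightarrow> real" and x y :: "int \<Rightarrow> real"
  assumes "M \<le> N"
  shows "(\<Sum>n\<in>{M..<N}. G (x (n+1)) (y n) - G (x (n+1)) (y (n+1))) =
    (\<Sum>n\<in>{M..<N+1}. G (x (n+1)) (y n) - G (x n) (y n)) + G (x M) (y M) - G (x (N+1)) (y N)"
  using assms
proof (induction N rule: int_ge_induct)
  case base
  have "{M..<M+1} = {M}" by auto
  then show ?case by simp
next
  case (step i)
  have a: "{M..<i+1} = insert i {M..<i}" using step by auto
  have b: "{M..<i+1+1} = insert (i+1) {M..<i+1}" using step by auto
  show ?case unfolding b using step by (simp add: a)
qed



context bill begin

lemma cis_cc: "cis (\<phi> k) = fst (oriented_line (\<gamma> (s k)) (\<gamma> (s (k + 1)))) \<Longrightarrow> cis (\<phi> k) = cc (s k) (s (k + 1))"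
  by (simp add: fst_ol cc_def)

lemma E1orb:
  assumes "cis (\<phi> n) = fst (oriented_line (\<gamma> (s n)) (\<gamma> (s (n + 1))))"
  shows "F (s (n+1)) (\<phi> n) - F (s n) (\<phi> n) = L_gen \<gamma> (s n) (s (n+1))"
  by (rule E1) (use assms in \<open>simp add: fst_ol\<close>)

lemma E2orb:
  assumes orb: "billiard_orbit \<gamma> \<gamma>' P s"
    and cphi: "\<forall>k. cis (\<phi> k) = fst (oriented_line (\<gamma> (s k)) (\<gamma> (s (k + 1))))"
    and gap: "\<forall>k. \<phi> k < \<phi> (k + 1) \<and> \<phi> (k + 1) < \<phi> k + 2 * pi"
  shows "F (s (n+1)) (\<phi> n) - F (s (n+1)) (\<phi> (n+1)) = S_gen \<gamma> (\<phi> n) (\<phi> (n+1))"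
proof (rule E2, rule allI)
  fix u
  show "inner (\<gamma> u) (cis ((\<phi> n + \<phi> (n + 1)) / 2)) \<le> inner (\<gamma> (s (n + 1))) (cis ((\<phi> n + \<phi> (n + 1)) / 2))"
    using reflect[OF orb cphi gap, of u "n+1"] by simp
qed


lemma dirA:
  assumes orb: "billiard_orbit \<gamma> \<gamma>' P s"
    and cphi: "\<forall>k. cis (\<phi> k) = fst (oriented_line (\<gamma> (s k)) (\<gamma> (s (k + 1))))"
    and gap: "\<forall>k. \<phi> k < \<phi> (k + 1) \<and> \<phi> (k + 1) < \<phi> k + 2 * pi"
    and mS: "m_config (S_gen \<gamma>) \<phi>"
  shows "m_config (L_gen \<gamma>) s"
  unfolding m_config_def
proof (intro allI impI)
  fix M N :: int assume MN: "M < N"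
  have "M - 1 < N" using MN by simp
  then obtain eS where eS: "eS > 0" "\<forall>y. (\<forall>n. (n \<le> M - 1 \<or> N \<le> n) \<longrightarrow> y n = \<phi> n) \<and> (\<forall>n. \<bar>y n - \<phi> n\<bar> < eS) \<longrightarrow>
      (\<Sum>n\<in>{M - 1..<N}. S_gen \<gamma> (y n) (y (n + 1))) \<le> (\<Sum>n\<in>{M - 1..<N}. S_gen \<gamma> (\<phi> n) (\<phi> (n + 1)))"
    using mS unfolding m_config_def by blast
  define gp where "gp n = min (\<phi> (n+1) - \<phi> n) (2*pi - (\<phi> (n+1) - \<phi> n))" for n
  have gp: "gp n > 0" for n using gap[rule_format, of n] by (simp add: gp_def)
  define \<epsilon> where "\<epsilon> n = min eS (min (gp (n-1)) (gp n) / 2)" for n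
  have \<epsilon>pos: "\<epsilon> n > 0" for n using gp eS by (simp add: \<epsilon>_def)
  have ne: "\<gamma> (s n) \<noteq> \<gamma> (s (n+1))" for n using orb_neq[OF orb] by simp
  have ccn: "cc (s n) (s (n+1)) \<noteq> 0" for n using norm_cc[OF ne[of n]] by auto
  obtain d where d: "d > 0" "\<forall>n\<in>{M..<N}. \<forall>a b. \<bar>a - s n\<bar> < d \<longrightarrow> \<bar>b - s (n+1)\<bar> < d \<longrightarrow>
        \<bar>Arg (cc a b / cc (s n) (s (n+1)))\<bar> < \<epsilon> n"
    using finite_min_delta[of "{M..<N}" "\<lambda>n d. \<forall>a b. \<bar>a - s n\<bar> < d \<longrightarrow> \<bar>b - s (n+1)\<bar> < d \<longrightarrow>
        \<bar>Arg (cc a b / cc (s n) (s (n+1)))\<bar> < \<epsilon> n"] arg_close[OF ne \<epsilon>pos] by fastforce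
  show "\<exists>e>0. \<forall>x. (\<forall>n. n \<le> M \<or> N \<le> n \<longrightarrow> x n = s n) \<and> (\<forall>n. \<bar>x n - s n\<bar> < e) \<longrightarrow>
      (\<Sum>n\<in>{M..<N}. L_gen \<gamma> (x n) (x (n + 1))) \<le> (\<Sum>n\<in>{M..<N}. L_gen \<gamma> (s n) (s (n + 1)))"
  proof (intro exI[of _ d] conjI allI impI)
    show "d > 0" by (rule d(1))
    fix x assume x: "(\<forall>n. n \<le> M \<or> N \<le> n \<longrightarrow> x n = s n) \<and> (\<forall>n. \<bar>x n - s n\<bar> < d)"
    define A where "A n = Arg (cc (x n) (x (n+1)) / cc (s n) (s (n+1)))" for n
    define y where "y n = \<phi> n + A n" for n
    have A0: "A n = 0" if "n \<notin> {M..<N}" for n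
    proof -
      have "x n = s n" "x (n+1) = s (n+1)" using x that by auto
      then show ?thesis unfolding A_def using ccn[of n] by simp
    qed
    have Ab: "\<bar>A n\<bar> < \<epsilon> n" for n
    proof (cases "n \<in> {M..<N}")
      case True then show ?thesis using d(2) x unfolding A_def by blast
    next
      case False then show ?thesis using A0 \<epsilon>pos by simp
    qed
    have y_out: "\<forall>n. (n \<le> M - 1 \<or> N \<le> n) \<longrightarrow> y n = \<phi> n" using A0 unfolding y_def by auto
    have y_close: "\<forall>n. \<bar>y n - \<phi> n\<bar> < eS"
    proof
      fix n have "\<epsilon> n \<le> eS" by (simp add: \<epsilon>_def)
      then show "\<bar>y n - \<phi> n\<bar> < eS" using Ab[of n] unfolding y_def by simp
    qed
    have Sle: "(\<Sum>n\<in>{M - 1..<N}. S_gen \<gamma> (y n) (y (n + 1))) \<le> (\<Sum>n\<in>{M - 1..<N}. S_gen \<gamma> (\<phi> n) (\<phi> (n + 1)))"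
      using eS(2) y_out y_close by blast
    have sinpos: "sin ((y (n+1) - y n)/2) \<ge> 0" for n
    proof -
      have e1: "\<epsilon> (n+1) \<le> gp n / 2" "\<epsilon> n \<le> gp n / 2" by (simp_all add: \<epsilon>_def)
      have g1: "gp n \<le> \<phi> (n+1) - \<phi> n" "gp n \<le> 2*pi - (\<phi> (n+1) - \<phi> n)" by (simp_all add: gp_def)
      have "y (n+1) - y n = (\<phi> (n+1) - \<phi> n) + A (n+1) - A n" unfolding y_def by simp
      then have "0 \<le> (y (n+1) - y n)/2" "(y (n+1) - y n)/2 \<le> pi"
        using Ab[of n] Ab[of "n+1"] e1 g1 by (simp_all add: abs_less_iff)
      then show ?thesis by (rule sin_ge_zero)
    qed
    have cisy: "\<i> * cis (y n) = unit_dir (\<gamma> (x n)) (\<gamma> (x (n+1)))" if nx: "\<gamma> (x n) \<noteq> \<gamma> (x (n+1))" for n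
    proof -
      define z where "z = cc (x n) (x (n+1)) / cc (s n) (s (n+1))"
      have nz: "norm z = 1" unfolding z_def using norm_cc[OF nx] norm_cc[OF ne[of n]] by (simp add: norm_divide)
      then have "z \<noteq> 0" by auto
      then have "cis (A n) = z" unfolding A_def z_def[symmetric] using nz by (simp add: cis_Arg sgn_div_norm)
      then have "cis (y n) = cc (x n) (x (n+1))"
        unfolding y_def using cis_cc[of \<phi> n s, OF cphi[rule_format, of n]] ccn[of n] by (simp add: cis_mult[symmetric] z_def)
      then show ?thesis by (simp add: cc_def)
    qed
    have xM: "x M = s M" and xN: "x N = s N" using x by auto
    have yM: "y (M - 1) = \<phi> (M - 1)" and yN: "y N = \<phi> N" using y_out by auto
    have "(\<Sum>n\<in>{M..<N}. L_gen \<gamma> (x n) (x (n + 1))) = (\<Sum>n\<in>{M..<N}. F (x (n+1)) (y n) - F (x n) (y n))"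
      by (rule sum.cong[OF refl]) (rule E1[symmetric], rule cisy)
    also have "\<dots> = (\<Sum>n\<in>{M-1..<N}. F (x (n+1)) (y n) - F (x (n+1)) (y (n+1))) - F (x M) (y (M-1)) + F (x N) (y N)"
      by (rule chainA) (use MN in simp)
    also have "\<dots> \<le> (\<Sum>n\<in>{M-1..<N}. S_gen \<gamma> (y n) (y (n + 1))) - F (s M) (\<phi> (M-1)) + F (s N) (\<phi> N)"
      unfolding xM xN yM yN using sum_mono[of "{M-1..<N}" "\<lambda>n. F (x (n+1)) (y n) - F (x (n+1)) (y (n+1))"
          "\<lambda>n. S_gen \<gamma> (y n) (y (n + 1))"] K2[OF sinpos] by simp
    also have "\<dots> \<le> (\<Sum>n\<in>{M-1..<N}. S_gen \<gamma> (\<phi> n) (\<phi> (n + 1))) - F (s M) (\<phi> (M-1)) + F (s N) (\<phi> N)"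
      using Sle by simp
    also have "\<dots> = (\<Sum>n\<in>{M-1..<N}. F (s (n+1)) (\<phi> n) - F (s (n+1)) (\<phi> (n+1))) - F (s M) (\<phi> (M-1)) + F (s N) (\<phi> N)"
      using E2orb[OF orb cphi gap] by simp
    also have "\<dots> = (\<Sum>n\<in>{M..<N}. F (s (n+1)) (\<phi> n) - F (s n) (\<phi> n))"
      by (rule chainA[symmetric]) (use MN in simp)
    also have "\<dots> = (\<Sum>n\<in>{M..<N}. L_gen \<gamma> (s n) (s (n + 1)))"
      using E1orb[of \<phi> _ s] cphi by (intro sum.cong) auto
    finally show "(\<Sum>n\<in>{M..<N}. L_gen \<gamma> (x n) (x (n + 1))) \<le> (\<Sum>n\<in>{M..<N}. L_gen \<gamma> (s n) (s (n + 1)))" .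
  qed
qed


lemma dirB:
  assumes orb: "billiard_orbit \<gamma> \<gamma>' P s"
    and cphi: "\<forall>k. cis (\<phi> k) = fst (oriented_line (\<gamma> (s k)) (\<gamma> (s (k + 1))))"
    and gap: "\<forall>k. \<phi> k < \<phi> (k + 1) \<and> \<phi> (k + 1) < \<phi> k + 2 * pi"
    and mL: "m_config (L_gen \<gamma>) s"
  shows "m_config (S_gen \<gamma>) \<phi>"
  unfolding m_config_def
proof (intro allI impI)
  fix M N :: int assume MN: "M < N"
  have "M < N + 1" using MN by simp
  then obtain eL where eL: "eL > 0" "\<forall>x. (\<forall>n. (n \<le> M \<or> N + 1 \<le> n) \<longrightarrow> x n = s n) \<and> (\<forall>n. \<bar>x n - s n\<bar> < eL) \<longrightarrow>
      (\<Sum>n\<in>{M..<N+1}. L_gen \<gamma> (x n) (x (n + 1))) \<le> (\<Sum>n\<in>{M..<N+1}. L_gen \<gamma> (s n) (s (n + 1)))"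
    using mL unfolding m_config_def by blast
  define \<psi> where "\<psi> n = (\<phi> (n - 1) + \<phi> n) / 2" for n
  have strict: "\<forall>u. \<gamma> u \<noteq> \<gamma> (s n) \<longrightarrow> inner (\<gamma> u) (cis (\<psi> n)) < inner (\<gamma> (s n)) (cis (\<psi> n))" for n
    using reflect[OF orb cphi gap] unfolding \<psi>_def by blast
  define Q where "Q n \<eta> \<longleftrightarrow> (\<forall>p t. \<bar>p - \<psi> n\<bar> < \<eta> \<longrightarrow> \<bar>t - s n\<bar> \<le> P/2 \<longrightarrow>
            (\<forall>u. inner (\<gamma> u) (cis p) \<le> inner (\<gamma> t) (cis p)) \<longrightarrow> \<bar>t - s n\<bar> < eL)" for n \<eta>
  have fin: "finite {M<..N}" by simp
  have ex: "\<forall>n\<in>{M<..N}. \<exists>\<eta>>0. Q n \<eta>" using argmax_close[OF strict eL(1)] unfolding Q_def by blast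
  have mono: "\<forall>n d d'. Q n d \<longrightarrow> 0 < d' \<longrightarrow> d' \<le> d \<longrightarrow> Q n d'"
    unfolding Q_def by (intro allI impI) (meson less_le_trans)
  obtain \<eta> where \<eta>: "\<eta> > 0" "\<forall>n\<in>{M<..N}. \<forall>p t. \<bar>p - \<psi> n\<bar> < \<eta> \<longrightarrow> \<bar>t - s n\<bar> \<le> P/2 \<longrightarrow>
            (\<forall>u. inner (\<gamma> u) (cis p) \<le> inner (\<gamma> t) (cis p)) \<longrightarrow> \<bar>t - s n\<bar> < eL"
    using finite_min_delta[OF fin ex mono] unfolding Q_def by blast
  show "\<exists>e>0. \<forall>y. (\<forall>n. n \<le> M \<or> N \<le> n \<longrightarrow> y n = \<phi> n) \<and> (\<forall>n. \<bar>y n - \<phi> n\<bar> < e) \<longrightarrow>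
      (\<Sum>n\<in>{M..<N}. S_gen \<gamma> (y n) (y (n + 1))) \<le> (\<Sum>n\<in>{M..<N}. S_gen \<gamma> (\<phi> n) (\<phi> (n + 1)))"
  proof (intro exI[of _ \<eta>] conjI allI impI)
    show "\<eta> > 0" by (rule \<eta>(1))
    fix y assume y: "(\<forall>n. n \<le> M \<or> N \<le> n \<longrightarrow> y n = \<phi> n) \<and> (\<forall>n. \<bar>y n - \<phi> n\<bar> < \<eta>)"
    define \<psi>' where "\<psi>' n = (y (n - 1) + y n) / 2" for n
    define x where "x n = (if M < n \<and> n \<le> N then (SOME t. \<bar>t - s n\<bar> \<le> P/2 \<and> (\<forall>u. inner (\<gamma> u) (cis (\<psi>' n)) \<le> inner (\<gamma> t) (cis (\<psi>' n)))) else s n)" for n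
    have xmax: "\<bar>x n - s n\<bar> \<le> P/2 \<and> (\<forall>u. inner (\<gamma> u) (cis (\<psi>' n)) \<le> inner (\<gamma> (x n)) (cis (\<psi>' n)))"
      if "M < n" "n \<le> N" for n
    proof -
      obtain t where t: "s n - P/2 \<le> t" "t \<le> s n - P/2 + P" "\<forall>u. inner (\<gamma> u) (cis (\<psi>' n)) \<le> inner (\<gamma> t) (cis (\<psi>' n))"
        using argmax[of "s n - P/2" "cis (\<psi>' n)"] by blast
      have "\<bar>t - s n\<bar> \<le> P/2" using t(1,2) by arith
      then have "\<exists>t. \<bar>t - s n\<bar> \<le> P/2 \<and> (\<forall>u. inner (\<gamma> u) (cis (\<psi>' n)) \<le> inner (\<gamma> t) (cis (\<psi>' n)))"
        using t(3) by blast
      note ex = this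
      have xd: "x n = (SOME t. \<bar>t - s n\<bar> \<le> P/2 \<and> (\<forall>u. inner (\<gamma> u) (cis (\<psi>' n)) \<le> inner (\<gamma> t) (cis (\<psi>' n))))"
        using that by (simp add: x_def)
      show ?thesis unfolding xd by (rule someI_ex[OF ex])
    qed
    have x_out: "\<forall>n. (n \<le> M \<or> N + 1 \<le> n) \<longrightarrow> x n = s n" unfolding x_def by auto
    have x_close: "\<forall>n. \<bar>x n - s n\<bar> < eL"
    proof
      fix n show "\<bar>x n - s n\<bar> < eL"
      proof (cases "M < n \<and> n \<le> N")
        case True
        have "\<bar>\<psi>' n - \<psi> n\<bar> < \<eta>"
          using y[THEN conjunct2, rule_format, of n] y[THEN conjunct2, rule_format, of "n - 1"]
          unfolding \<psi>'_def \<psi>_def by (simp add: abs_less_iff field_simps)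
        then show ?thesis using \<eta>(2) True xmax[of n] by auto
      next
        case False then have "x n = s n" unfolding x_def by (rule if_not_P)
        then show ?thesis using eL(1) by simp
      qed
    qed
    have Lle: "(\<Sum>n\<in>{M..<N+1}. L_gen \<gamma> (x n) (x (n + 1))) \<le> (\<Sum>n\<in>{M..<N+1}. L_gen \<gamma> (s n) (s (n + 1)))"
      using eL(2) x_out x_close by blast
    have xM: "x M = s M" and xN: "x (N+1) = s (N+1)" using x_out by auto
    have yM: "y M = \<phi> M" and yN: "y N = \<phi> N" using y by auto
    have "(\<Sum>n\<in>{M..<N}. S_gen \<gamma> (y n) (y (n + 1))) = (\<Sum>n\<in>{M..<N}. F (x (n+1)) (y n) - F (x (n+1)) (y (n+1)))"
    proof (rule sum.cong[OF refl])
      fix n assume n: "n \<in> {M..<N}"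
      have "\<forall>u. inner (\<gamma> u) (cis ((y n + y (n+1))/2)) \<le> inner (\<gamma> (x (n+1))) (cis ((y n + y (n+1))/2))"
        using xmax[of "n+1"] n unfolding \<psi>'_def by simp
      then show "S_gen \<gamma> (y n) (y (n + 1)) = F (x (n+1)) (y n) - F (x (n+1)) (y (n+1))"
        by (rule E2[symmetric])
    qed
    also have "\<dots> = (\<Sum>n\<in>{M..<N+1}. F (x (n+1)) (y n) - F (x n) (y n)) + F (x M) (y M) - F (x (N+1)) (y N)"
      by (rule chainB) (use MN in simp)
    also have "\<dots> \<le> (\<Sum>n\<in>{M..<N+1}. L_gen \<gamma> (x n) (x (n + 1))) + F (s M) (\<phi> M) - F (s (N+1)) (\<phi> N)"
      unfolding xM xN yM yN using sum_mono[of "{M..<N+1}" "\<lambda>n. F (x (n+1)) (y n) - F (x n) (y n)"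
          "\<lambda>n. L_gen \<gamma> (x n) (x (n + 1))"] K1 by simp
    also have "\<dots> \<le> (\<Sum>n\<in>{M..<N+1}. L_gen \<gamma> (s n) (s (n + 1))) + F (s M) (\<phi> M) - F (s (N+1)) (\<phi> N)"
      using Lle by simp
    also have "\<dots> = (\<Sum>n\<in>{M..<N+1}. F (s (n+1)) (\<phi> n) - F (s n) (\<phi> n)) + F (s M) (\<phi> M) - F (s (N+1)) (\<phi> N)"
      using E1orb[of \<phi> _ s] cphi by simp
    also have "\<dots> = (\<Sum>n\<in>{M..<N}. F (s (n+1)) (\<phi> n) - F (s (n+1)) (\<phi> (n+1)))"
      by (rule chainB[symmetric]) (use MN in simp)
    also have "\<dots> = (\<Sum>n\<in>{M..<N}. S_gen \<gamma> (\<phi> n) (\<phi> (n + 1)))"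
      using E2orb[OF orb cphi gap] by simp
    finally show "(\<Sum>n\<in>{M..<N}. S_gen \<gamma> (y n) (y (n + 1))) \<le> (\<Sum>n\<in>{M..<N}. S_gen \<gamma> (\<phi> n) (\<phi> (n + 1)))" .
  qed
qed

end


theorem theorem2p3:
  fixes \<gamma> \<gamma>' \<gamma>'' :: "real \<Rightarrow> complex" and P :: real
  assumes "P > 0"
    and "\<forall>t. (\<gamma> has_vector_derivative \<gamma>' t) (at t)"
    and "\<forall>t. (\<gamma>' has_vector_derivative \<gamma>'' t) (at t)"
    and "continuous_on UNIV \<gamma>''"
    and "\<forall>t. norm (\<gamma>' t) = 1"
    and "\<forall>t. \<gamma> (t + P) = \<gamma> t"
    and "inj_on \<gamma> {0..<P}"
    and "\<forall>s t. \<gamma> t \<noteq> \<gamma> s \<longrightarrow> Im (cnj (\<gamma>' s) * (\<gamma> t - \<gamma> s)) > 0"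
    and "0 \<in> interior (convex hull (range \<gamma>))"
  shows "M_L \<gamma> \<gamma>' P = M_S \<gamma> \<gamma>' P"
proof -
  have c: "continuous_on UNIV \<gamma>"
    using assms(2) has_vector_derivative_continuous continuous_at_imp_continuous_on by blast
  interpret bill \<gamma> \<gamma>' P
    using assms(1,5,6,7,8) c by unfold_locales auto
  show ?thesis
  proof
    show "M_L \<gamma> \<gamma>' P \<subseteq> M_S \<gamma> \<gamma>' P"
    proof
      fix l assume "l \<in> M_L \<gamma> \<gamma>' P"
      then obtain s n where l: "l = oriented_line (\<gamma> (s n)) (\<gamma> (s (n + 1)))"
        and orb: "billiard_orbit \<gamma> \<gamma>' P s" and mL: "m_config (L_gen \<gamma>) s"
        unfolding M_L_def by blast
      obtain \<phi> where \<phi>: "\<forall>k. cis (\<phi> k) = fst (oriented_line (\<gamma> (s k)) (\<gamma> (s (k + 1)))) \<and>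
             \<phi> k < \<phi> (k + 1) \<and> \<phi> (k + 1) < \<phi> k + 2 * pi"
        using phi_exists[OF orb] by blast
      have cphi: "\<forall>k. cis (\<phi> k) = fst (oriented_line (\<gamma> (s k)) (\<gamma> (s (k + 1))))"
        and gap: "\<forall>k. \<phi> k < \<phi> (k + 1) \<and> \<phi> (k + 1) < \<phi> k + 2 * pi" using \<phi> by auto
      have "m_config (S_gen \<gamma>) \<phi>" by (rule dirB[OF orb cphi gap mL])
      then show "l \<in> M_S \<gamma> \<gamma>' P" unfolding M_S_def l using orb \<phi> by blast
    qed
  next
    show "M_S \<gamma> \<gamma>' P \<subseteq> M_L \<gamma> \<gamma>' P"
    proof
      fix l assume "l \<in> M_S \<gamma> \<gamma>' P"
      then obtain s \<phi> n where l: "l = oriented_line (\<gamma> (s n)) (\<gamma> (s (n + 1)))"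
        and orb: "billiard_orbit \<gamma> \<gamma>' P s"
        and \<phi>: "\<forall>k. cis (\<phi> k) = fst (oriented_line (\<gamma> (s k)) (\<gamma> (s (k + 1)))) \<and>
             \<phi> k < \<phi> (k + 1) \<and> \<phi> (k + 1) < \<phi> k + 2 * pi"
        and mS: "m_config (S_gen \<gamma>) \<phi>"
        unfolding M_S_def by blast
      have cphi: "\<forall>k. cis (\<phi> k) = fst (oriented_line (\<gamma> (s k)) (\<gamma> (s (k + 1))))"
        and gap: "\<forall>k. \<phi> k < \<phi> (k + 1) \<and> \<phi> (k + 1) < \<phi> k + 2 * pi" using \<phi> by auto
      have "m_config (L_gen \<gamma>) s" by (rule dirA[OF orb cphi gap mS])
      then show "l \<in> M_L \<gamma> \<gamma>' P" unfolding M_L_def l using orb by blast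
    qed
  qed
qed

end
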